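(* Let $K,N$ be homogeneous bi-variate means and $G(s,t)=\sqrt{st}$. If $G$ is $(K,N)$-stabilized, i.e. $G(s,t)=K\big(N(s,G(s,t)),N(G(s,t),t)\big)$ for all $s,t>0$, then $G(s,t)=N(\sqrt s,\sqrt t)\,K(\sqrt s,\sqrt t)$ for all $s,t>0$, $G$ is also $(N,K)$-stabilized, and $N(s,t)K(s,t)=st$, i.e. $G\big(N(s,t),K(s,t)\big)=G(s,t)$, for all $s,t>0$.
   Context: A bi-variate mean is $M:(0,\infty)^2\to(0,\infty)$ with $\min(s,t)\le M(s,t)\le\max(s,t)$; homogeneous means $M(\lambda s,\lambda t)=\lambda M(s,t)$ for $\lambda,s,t>0$. $M$ is $(K,N)$-stabilized if $M(s,t)=K\big(N(s,M(s,t)),N(M(s,t),t)\big)$ for all $s,t>0$. *)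

theory Defs
  imports Complex_Main
begin

text \<open>A bi-variate mean on (0,oo)^2: positive-valued, between min and max.
  Functions are total on real x real; only values at positive arguments matter.\<close>
definition is_mean :: "(real \<Rightarrow> real \<Rightarrow> real) \<Rightarrow> bool" where
  "is_mean M \<longleftrightarrow> (\<forall>s>0. \<forall>t>0. M s t > 0 \<and> min s t \<le> M s t \<and> M s t \<le> max s t)"

definition homogeneous_mean :: "(real \<Rightarrow> real \<Rightarrow> real) \<Rightarrow> bool" where
  "homogeneous_mean M \<longleftrightarrow> is_mean M \<and>
     (\<forall>l>0. \<forall>s>0. \<forall>t>0. M (l * s) (l * t) = l * M s t)"

definition stabilized :: "(real \<Rightarrow> real \<Rightarrow> real) \<Rightarrow> (real \<Rightarrow> real \<Rightarrow> real) \<Rightarrow> (real \<Rightarrow> real \<Rightarrow> real) \<Rightarrow> bool" where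
  "stabilized M K N \<longleftrightarrow> (\<forall>s>0. \<forall>t>0. M s t = K (N s (M s t)) (N (M s t) t))"

definition geo_mean :: "real \<Rightarrow> real \<Rightarrow> real" where
  "geo_mean s t = sqrt (s * t)"

end

theory Submission
  imports Defs
begin

lemma key:
  fixes K N :: "real \<Rightarrow> real \<Rightarrow> real"
  assumes hK: "homogeneous_mean K" and hN: "homogeneous_mean N"
    and st: "stabilized geo_mean K N" and a: "a > 0" and b: "b > 0"
  shows "N a b * K a b = a * b"
proof -
  have g: "geo_mean (a*a) (b*b) = a*b" using a b
    by (simp add: geo_mean_def real_sqrt_mult)
  have Npos: "N a b > 0" using hN a b by (auto simp: homogeneous_mean_def is_mean_def)
  have h1: "N (a*a) (a*b) = a * N a b" using hN a b by (simp add: homogeneous_mean_def)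
  have h2: "N (a*b) (b*b) = b * N a b" using hN a b
    by (metis (no_types, lifting) homogeneous_mean_def mult.commute)
  have h3: "K (N a b * a) (N a b * b) = N a b * K a b" using hK a b Npos
    by (simp add: homogeneous_mean_def)
  have "a*b = K (N (a*a) (a*b)) (N (a*b) (b*b))"
    using st a b g unfolding stabilized_def
    by (metis mult_pos_pos)
  also have "\<dots> = N a b * K a b" using h1 h2 h3 by (simp add: mult.commute)
  finally show ?thesis by simp
qed

theorem mainTheorem11:
  fixes K N :: "real \<Rightarrow> real \<Rightarrow> real"
  assumes "homogeneous_mean K" and "homogeneous_mean N"
    and "stabilized geo_mean K N"
  shows "(\<forall>s>0. \<forall>t>0. geo_mean s t = N (sqrt s) (sqrt t) * K (sqrt s) (sqrt t))
    \<and> stabilized geo_mean N K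
    \<and> (\<forall>s>0. \<forall>t>0. N s t * K s t = s * t \<and> geo_mean (N s t) (K s t) = geo_mean s t)"
proof (intro conjI allI impI)
  fix s t :: real assume s: "s > 0" and t: "t > 0"
  show "geo_mean s t = N (sqrt s) (sqrt t) * K (sqrt s) (sqrt t)"
    using key[OF assms, of "sqrt s" "sqrt t"] s t by (simp add: geo_mean_def real_sqrt_mult)
next
  fix s t :: real assume s: "s > 0" and t: "t > 0"
  show "N s t * K s t = s * t" using key[OF assms s t] .
next
  fix s t :: real assume s: "s > 0" and t: "t > 0"
  show "geo_mean (N s t) (K s t) = geo_mean s t"
    using key[OF assms s t] by (simp add: geo_mean_def)
next
  show "stabilized geo_mean N K"
    unfolding stabilized_def
  proof (intro allI impI)
    fix s t :: real assume s: "s > 0" and t: "t > 0"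
    define a where "a = sqrt s"
    define b where "b = sqrt t"
    have a: "a > 0" and b: "b > 0" using s t by (auto simp: a_def b_def)
    have sa: "s = a*a" and tb: "t = b*b" using s t by (auto simp: a_def b_def)
    have g: "geo_mean s t = a*b" using a b sa tb
      by (simp add: geo_mean_def real_sqrt_mult)
    have Kpos: "K a b > 0" using assms(1) a b by (auto simp: homogeneous_mean_def is_mean_def)
    have h1: "K (a*a) (a*b) = a * K a b" using assms(1) a b by (simp add: homogeneous_mean_def)
    have h2: "K (a*b) (b*b) = b * K a b" using assms(1) a b
      by (metis (no_types, lifting) homogeneous_mean_def mult.commute)
    have h3: "N (K a b * a) (K a b * b) = K a b * N a b" using assms(2) a b Kpos
      by (simp add: homogeneous_mean_def)
    have "N (K s (geo_mean s t)) (K (geo_mean s t) t) = K a b * N a b"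
      using g sa tb h1 h2 h3 by (simp add: mult.commute)
    also have "\<dots> = a * b" using key[OF assms a b] by (simp add: mult.commute)
    finally show "geo_mean s t = N (K s (geo_mean s t)) (K (geo_mean s t) t)" using g by simp
  qed
qed

end
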